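(* Let $P\in\{0,1\}^{k\times\ell}$ be a pattern with two rows $r_1\le r_2$ and a column $c$ such that for every $r\in[r_1,r_2]$, $P$ has no 1-entry in row $r$ except possibly $(r,c)$. Suppose moreover $P$ satisfies one of: Type 1: all 1-entries of $P$ above row $r_1$ lie in column $c$ or in row $r_1-1$, and all 1-entries below row $r_2$ lie in column $c$ or in row $r_2+1$; Type 2: all 1-entries above row $r_1$ lie in column $c$ or in row $r_1-1$, and all 1-entries below row $r_2$ lie in $P[(r_2,k]\times[c,\ell]]$; Type 3: all 1-entries above row $r_1$ lie in $P[[1,r_1)\times[c]]$, and all 1-entries below row $r_2$ lie in $P[(r_2,k]\times[c,\ell]]$. Then every 1-entry of $P$ in $[r_1,r_2]\times\{c\}$ is row-bounding.
   Context: All matrices are binary; rows numbered top to bottom, columns left to right; $(i,j)$ is the entry in row $i$, column $j$; $[a,b]=\{a,\dots,b\}$, $[a,b)=[a,b-1]$, $(a,b]=[a+1,b]$, $[n]=[1,n]$; $P[R\times C]$ is the submatrix on rows $R$ and columns $C$. $M\Delta f$ is $M$ with the value of entry $f$ switched. An embedding of $P\in\{0,1\}^{k\times\ell}$ into $M\in\{0,1\}^{m\times n}$ is a map $\phi:[k]\times[\ell]\to[m]\times[n]$ sending 1-entries to 1-entries such that if $e_1=(i_1,j_1)$, $e_2=(i_2,j_2)$ map to $(i_1^*,j_1^* )$, $(i_2^*,j_2^* )$, then $i_1<i_2\Rightarrow i_1^*<i_2^*$ and $j_1<j_2\Rightarrow j_1^*<j_2^*$. $M$ avoids $P$ if no embedding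 exists; $\mathrm{Av}(P)$ is the set of $P$-avoiding matrices. For a 1-entry $e$ of $P$ and $M\in\mathrm{Av}(P)$, a 0-entry $f$ of $M$ is critical for $e$ if some embedding of $P$ into $M\Delta f$ maps $e$ to $f$; a horizontal 0-run (maximal run of consecutive 0-entries in a row) is critical for $e$ if it contains a 0-entry critical for $e$. $e$ is row-bounding if there is a constant $K$ such that for every $M\in\mathrm{Av}(P)$ every row of $M$ contains at most $K$ horizontal 0-runs critical for $e$. *)

theory Defs
  imports Main
begin

text \<open>A binary matrix of size m x n is represented by its entry function
  M :: nat \<Rightarrow> nat \<Rightarrow> bool (True = 1-entry), indices 1-based;
  only entries in [1,m] x [1,n] are relevant.\<close>

definition entries :: "nat \<Rightarrow> nat \<Rightarrow> (nat \<times> nat) set" where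
  "entries m n = {1..m} \<times> {1..n}"

definition switch :: "(nat \<Rightarrow> nat \<Rightarrow> bool) \<Rightarrow> nat \<times> nat \<Rightarrow> (nat \<Rightarrow> nat \<Rightarrow> bool)" where
  "switch M f = (\<lambda>i j. if (i, j) = f then \<not> M i j else M i j)"

definition is_embedding ::
  "nat \<Rightarrow> nat \<Rightarrow> (nat \<Rightarrow> nat \<Rightarrow> bool) \<Rightarrow> nat \<Rightarrow> nat \<Rightarrow> (nat \<Rightarrow> nat \<Rightarrow> bool)
   \<Rightarrow> (nat \<times> nat \<Rightarrow> nat \<times> nat) \<Rightarrow> bool" where
  "is_embedding k l P m n M \<phi> \<longleftrightarrow>
     (\<forall>e\<in>entries k l. \<phi> e \<in> entries m n) \<and>
     (\<forall>e\<in>entries k l. P (fst e) (snd e) \<longrightarrow> M (fst (\<phi> e)) (snd (\<phi> e))) \<and>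
     (\<forall>e1\<in>entries k l. \<forall>e2\<in>entries k l.
        (fst e1 < fst e2 \<longrightarrow> fst (\<phi> e1) < fst (\<phi> e2)) \<and>
        (snd e1 < snd e2 \<longrightarrow> snd (\<phi> e1) < snd (\<phi> e2)))"

definition avoids ::
  "nat \<Rightarrow> nat \<Rightarrow> (nat \<Rightarrow> nat \<Rightarrow> bool) \<Rightarrow> nat \<Rightarrow> nat \<Rightarrow> (nat \<Rightarrow> nat \<Rightarrow> bool) \<Rightarrow> bool" where
  "avoids k l P m n M \<longleftrightarrow> \<not> (\<exists>\<phi>. is_embedding k l P m n M \<phi>)"

definition critical_entry ::
  "nat \<Rightarrow> nat \<Rightarrow> (nat \<Rightarrow> nat \<Rightarrow> bool) \<Rightarrow> nat \<times> nat \<Rightarrow> nat \<Rightarrow> nat \<Rightarrow> (nat \<Rightarrow> nat \<Rightarrow> bool)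
   \<Rightarrow> nat \<times> nat \<Rightarrow> bool" where
  "critical_entry k l P e m n M f \<longleftrightarrow>
     f \<in> entries m n \<and> \<not> M (fst f) (snd f) \<and>
     (\<exists>\<phi>. is_embedding k l P m n (switch M f) \<phi> \<and> \<phi> e = f)"

definition hzero_run :: "nat \<Rightarrow> nat \<Rightarrow> (nat \<Rightarrow> nat \<Rightarrow> bool) \<Rightarrow> nat \<Rightarrow> nat \<Rightarrow> nat \<Rightarrow> bool" where
  "hzero_run m n M i a b \<longleftrightarrow>
     i \<in> {1..m} \<and> 1 \<le> a \<and> a \<le> b \<and> b \<le> n \<and>
     (\<forall>j\<in>{a..b}. \<not> M i j) \<and>
     (a = 1 \<or> M i (a - 1)) \<and> (b = n \<or> M i (b + 1))"

definition critical_runs ::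
  "nat \<Rightarrow> nat \<Rightarrow> (nat \<Rightarrow> nat \<Rightarrow> bool) \<Rightarrow> nat \<times> nat \<Rightarrow> nat \<Rightarrow> nat \<Rightarrow> (nat \<Rightarrow> nat \<Rightarrow> bool)
   \<Rightarrow> nat \<Rightarrow> (nat \<times> nat) set" where
  "critical_runs k l P e m n M i =
     {(a, b). hzero_run m n M i a b \<and> (\<exists>j\<in>{a..b}. critical_entry k l P e m n M (i, j))}"

definition row_bounding ::
  "nat \<Rightarrow> nat \<Rightarrow> (nat \<Rightarrow> nat \<Rightarrow> bool) \<Rightarrow> nat \<times> nat \<Rightarrow> bool" where
  "row_bounding k l P e \<longleftrightarrow>
     (\<exists>K::nat. \<forall>m n M. avoids k l P m n M \<longrightarrow>
        (\<forall>i\<in>{1..m}. card (critical_runs k l P e m n M i) \<le> K))"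

end

theory Submission
  imports Defs
begin

definition inblk :: "(nat \<Rightarrow> nat) \<Rightarrow> (nat \<Rightarrow> nat) \<Rightarrow> nat \<Rightarrow> nat \<Rightarrow> nat \<times> nat \<Rightarrow> bool" where
  "inblk \<rho> \<gamma> a b x \<longleftrightarrow> \<rho> (a-1) < fst x \<and> fst x \<le> \<rho> a \<and> \<gamma> (b-1) < snd x \<and> snd x \<le> \<gamma> b"

definition cuts :: "nat \<Rightarrow> nat \<Rightarrow> (nat \<Rightarrow> nat) \<Rightarrow> bool" where
  "cuts k m \<rho> \<longleftrightarrow> (\<forall>a\<in>{1..k}. \<rho> (a-1) < \<rho> a) \<and> \<rho> k \<le> m"

lemma cuts_step: "cuts k m \<rho> \<Longrightarrow> 1 \<le> a \<Longrightarrow> a \<le> k \<Longrightarrow> \<rho> (a-1) < \<rho> a"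
  unfolding cuts_def by auto

lemma cuts_mono: "cuts k m \<rho> \<Longrightarrow> a \<le> a' \<Longrightarrow> a' \<le> k \<Longrightarrow> \<rho> a \<le> \<rho> a'"
proof (induction a')
  case 0 then show ?case by simp
next
  case (Suc x)
  show ?case
  proof (cases "a \<le> x")
    case True
    with Suc have "\<rho> a \<le> \<rho> x" by simp
    moreover have "\<rho> x < \<rho> (Suc x)" using cuts_step[OF Suc.prems(1), of "Suc x"] Suc.prems by simp
    ultimately show ?thesis by simp
  next
    case False with Suc.prems have "a = Suc x" by simp
    then show ?thesis by simp
  qed
qed

lemma cuts_le: "cuts k m \<rho> \<Longrightarrow> a \<le> k \<Longrightarrow> \<rho> a \<le> m"
  using cuts_mono[of k m \<rho> a k] unfolding cuts_def by auto

lemma grid_to_emb: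
  assumes C: "cuts k m \<rho>" "cuts l n \<gamma>"
    and W: "\<forall>a\<in>{1..k}. \<forall>b\<in>{1..l}. P a b \<longrightarrow> (\<exists>x. inblk \<rho> \<gamma> a b x \<and> M (fst x) (snd x))"
  shows "\<exists>\<phi>. is_embedding k l P m n M \<phi>"
proof -
  define \<phi> where "\<phi> = (\<lambda>e. if e \<in> entries k l \<and> P (fst e) (snd e)
      then (SOME x. inblk \<rho> \<gamma> (fst e) (snd e) x \<and> M (fst x) (snd x)) else (\<rho> (fst e), \<gamma> (snd e)))"
  have both: "inblk \<rho> \<gamma> (fst e) (snd e) (\<phi> e) \<and> (P (fst e) (snd e) \<longrightarrow> M (fst (\<phi> e)) (snd (\<phi> e)))"
    if e: "e \<in> entries k l" for e
  proof (cases "P (fst e) (snd e)")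
    case True
    then have "\<exists>x. inblk \<rho> \<gamma> (fst e) (snd e) x \<and> M (fst x) (snd x)" using W e by (auto simp: entries_def)
    then have "inblk \<rho> \<gamma> (fst e) (snd e) (SOME x. inblk \<rho> \<gamma> (fst e) (snd e) x \<and> M (fst x) (snd x))
       \<and> M (fst (SOME x. inblk \<rho> \<gamma> (fst e) (snd e) x \<and> M (fst x) (snd x))) (snd (SOME x. inblk \<rho> \<gamma> (fst e) (snd e) x \<and> M (fst x) (snd x)))"
      by (rule someI_ex)
    then have "inblk \<rho> \<gamma> (fst e) (snd e) (\<phi> e) \<and> M (fst (\<phi> e)) (snd (\<phi> e))"
      using True e unfolding \<phi>_def by simp
    then show ?thesis by simp
  next
    case False
    have "\<rho> (fst e - 1) < \<rho> (fst e)" "\<gamma> (snd e - 1) < \<gamma> (snd e)"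
      using cuts_step[OF C(1)] cuts_step[OF C(2)] e by (auto simp: entries_def)
    then show ?thesis using False e unfolding \<phi>_def inblk_def by auto
  qed
  have A: "\<phi> e \<in> entries m n" if e: "e \<in> entries k l" for e
  proof -
    from e have ek: "fst e \<le> k" "snd e \<le> l" by (auto simp: entries_def)
    have "inblk \<rho> \<gamma> (fst e) (snd e) (\<phi> e)" using both e by blast
    then show "\<phi> e \<in> entries m n"
      using cuts_le[OF C(1) ek(1)] cuts_le[OF C(2) ek(2)]
      unfolding inblk_def entries_def by (cases "\<phi> e") auto
  qed
  have B: "(fst e1 < fst e2 \<longrightarrow> fst (\<phi> e1) < fst (\<phi> e2)) \<and> (snd e1 < snd e2 \<longrightarrow> snd (\<phi> e1) < snd (\<phi> e2))"
    if e1: "e1 \<in> entries k l" and e2: "e2 \<in> entries k l" for e1 e2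
  proof (intro conjI impI)
    have b1: "inblk \<rho> \<gamma> (fst e1) (snd e1) (\<phi> e1)" and b2: "inblk \<rho> \<gamma> (fst e2) (snd e2) (\<phi> e2)"
      using both e1 e2 by blast+
    have k2: "fst e2 \<le> k" "snd e2 \<le> l" using e2 by (auto simp: entries_def)
    {
      assume "fst e1 < fst e2"
      then have "\<rho> (fst e1) \<le> \<rho> (fst e2 - 1)" using cuts_mono[OF C(1), of "fst e1" "fst e2 - 1"] k2 by simp
      then show "fst (\<phi> e1) < fst (\<phi> e2)" using b1 b2 unfolding inblk_def by simp
    }
    {
      assume "snd e1 < snd e2"
      then have "\<gamma> (snd e1) \<le> \<gamma> (snd e2 - 1)" using cuts_mono[OF C(2), of "snd e1" "snd e2 - 1"] k2 by simp
      then show "snd (\<phi> e1) < snd (\<phi> e2)" using b1 b2 unfolding inblk_def by simp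
    }
  qed
  have "is_embedding k l P m n M \<phi>"
    unfolding is_embedding_def using A B both by blast
  then show ?thesis by blast
qed

lemma emb_to_grid:
  assumes E: "is_embedding k l P m n M \<phi>" and kl: "1 \<le> k" "1 \<le> l"
  shows "\<exists>\<rho> \<gamma>. cuts k m \<rho> \<and> cuts l n \<gamma> \<and> (\<forall>a\<in>{1..k}. \<forall>b\<in>{1..l}. inblk \<rho> \<gamma> a b (\<phi> (a,b)))"
proof -
  define \<rho> where "\<rho> a = (if a = 0 then 0 else Max ((\<lambda>b. fst (\<phi> (a,b))) ` {1..l}))" for a
  define \<gamma> where "\<gamma> b = (if b = 0 then 0 else Max ((\<lambda>a. snd (\<phi> (a,b))) ` {1..k}))" for b
  have E1: "\<And>a b. a \<in> {1..k} \<Longrightarrow> b \<in> {1..l} \<Longrightarrow> \<phi> (a,b) \<in> entries m n"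
    using E unfolding is_embedding_def entries_def by auto
  have E3: "\<And>a b a' b'. a \<in> {1..k} \<Longrightarrow> b \<in> {1..l} \<Longrightarrow> a' \<in> {1..k} \<Longrightarrow> b' \<in> {1..l} \<Longrightarrow>
      (a < a' \<longrightarrow> fst (\<phi> (a,b)) < fst (\<phi> (a',b'))) \<and> (b < b' \<longrightarrow> snd (\<phi> (a,b)) < snd (\<phi> (a',b')))"
    using E unfolding is_embedding_def entries_def by (metis fst_conv mem_Sigma_iff snd_conv)
  have up1: "fst (\<phi> (a,b)) \<le> \<rho> a" if "a \<in> {1..k}" "b \<in> {1..l}" for a b
    using that unfolding \<rho>_def by (auto intro!: Max_ge)
  have up2: "snd (\<phi> (a,b)) \<le> \<gamma> b" if "a \<in> {1..k}" "b \<in> {1..l}" for a b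
    using that unfolding \<gamma>_def by (auto intro!: Max_ge)
  have lo1: "\<rho> (a-1) < fst (\<phi> (a,b))" if a: "a \<in> {1..k}" and b: "b \<in> {1..l}" for a b
  proof (cases "a = 1")
    case True then show ?thesis using E1[OF a b] unfolding \<rho>_def entries_def by (auto simp: mem_Times_iff)
  next
    case False
    have "\<rho> (a-1) \<in> (\<lambda>b. fst (\<phi> (a-1,b))) ` {1..l}" unfolding \<rho>_def using False a kl
      by (auto intro!: Max_in)
    then obtain b' where b': "b' \<in> {1..l}" "\<rho> (a-1) = fst (\<phi> (a-1,b'))" by auto
    have "a - 1 \<in> {1..k}" using a False by auto
    with E3[OF this b' (1) a b] b' a False show ?thesis by auto
  qed
  have lo2: "\<gamma> (b-1) < snd (\<phi> (a,b))" if a: "a \<in> {1..k}" and b: "b \<in> {1..l}" for a b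
  proof (cases "b = 1")
    case True then show ?thesis using E1[OF a b] unfolding \<gamma>_def entries_def by (auto simp: mem_Times_iff)
  next
    case False
    have "\<gamma> (b-1) \<in> (\<lambda>a. snd (\<phi> (a,b-1))) ` {1..k}" unfolding \<gamma>_def using False b kl
      by (auto intro!: Max_in)
    then obtain a' where a': "a' \<in> {1..k}" "\<gamma> (b-1) = snd (\<phi> (a',b-1))" by auto
    have "b - 1 \<in> {1..l}" using b False by auto
    with E3[OF a'(1) this a b] a' b False show ?thesis by auto
  qed
  have c1: "cuts k m \<rho>"
    unfolding cuts_def
  proof (intro conjI ballI)
    fix a assume a: "a \<in> {1..k}"
    show "\<rho> (a-1) < \<rho> a" using lo1[OF a, of 1] up1[OF a, of 1] kl by fastforce
  next
    have "\<forall>b\<in>{1..l}. fst (\<phi> (k,b)) \<le> m" using E1 kl unfolding entries_def by (auto simp: mem_Times_iff)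
    then show "\<rho> k \<le> m" unfolding \<rho>_def using kl by auto
  qed
  have c2: "cuts l n \<gamma>"
    unfolding cuts_def
  proof (intro conjI ballI)
    fix b assume b: "b \<in> {1..l}"
    show "\<gamma> (b-1) < \<gamma> b" using lo2[OF _ b, of 1] up2[OF _ b, of 1] kl by fastforce
  next
    have "\<forall>a\<in>{1..k}. snd (\<phi> (a,l)) \<le> n" using E1 kl unfolding entries_def by (auto simp: mem_Times_iff)
    then show "\<gamma> l \<le> n" unfolding \<gamma>_def using kl by auto
  qed
  have "\<forall>a\<in>{1..k}. \<forall>b\<in>{1..l}. inblk \<rho> \<gamma> a b (\<phi> (a,b))"
    unfolding inblk_def using up1 up2 lo1 lo2 by blast
  with c1 c2 show ?thesis by blast
qed

lemma crit_grid:
  assumes av: "avoids k l P m n M" and cr: "critical_entry k l P (r,c) m n M (i,j)"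
    and rc: "r \<in> {1..k}" "c \<in> {1..l}"
  shows "\<exists>\<rho> \<gamma>. cuts k m \<rho> \<and> cuts l n \<gamma> \<and> inblk \<rho> \<gamma> r c (i,j)
     \<and> (\<forall>a\<in>{1..k}. \<forall>b\<in>{1..l}. P a b \<and> (a,b) \<noteq> (r,c) \<longrightarrow> (\<exists>x. inblk \<rho> \<gamma> a b x \<and> M (fst x) (snd x)))
     \<and> (\<forall>x. inblk \<rho> \<gamma> r c x \<longrightarrow> \<not> M (fst x) (snd x))"
proof -
  from cr obtain \<phi> where emb: "is_embedding k l P m n (switch M (i,j)) \<phi>" and fe: "\<phi> (r,c) = (i,j)"
    unfolding critical_entry_def by auto
  have kl: "1 \<le> k" "1 \<le> l" using rc by auto
  obtain \<rho> \<gamma> where c1: "cuts k m \<rho>" and c2: "cuts l n \<gamma>" and bl: "\<forall>a\<in>{1..k}. \<forall>b\<in>{1..l}. inblk \<rho> \<gamma> a b (\<phi> (a,b))"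
    using emb_to_grid[OF emb kl] by blast
  have E2: "\<And>a b. a \<in> {1..k} \<Longrightarrow> b \<in> {1..l} \<Longrightarrow> P a b \<Longrightarrow> switch M (i,j) (fst (\<phi> (a,b))) (snd (\<phi> (a,b)))"
    using emb unfolding is_embedding_def entries_def by auto
  have E3: "\<And>a b a' b'. a \<in> {1..k} \<Longrightarrow> b \<in> {1..l} \<Longrightarrow> a' \<in> {1..k} \<Longrightarrow> b' \<in> {1..l} \<Longrightarrow>
      (a < a' \<longrightarrow> fst (\<phi> (a,b)) < fst (\<phi> (a',b'))) \<and> (b < b' \<longrightarrow> snd (\<phi> (a,b)) < snd (\<phi> (a',b')))"
    using emb unfolding is_embedding_def entries_def by (metis fst_conv mem_Sigma_iff snd_conv)
  have W: "\<forall>a\<in>{1..k}. \<forall>b\<in>{1..l}. P a b \<and> (a,b) \<noteq> (r,c) \<longrightarrow> (\<exists>x. inblk \<rho> \<gamma> a b x \<and> M (fst x) (snd x))"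
  proof (intro ballI impI)
    fix a b assume a: "a \<in> {1..k}" and b: "b \<in> {1..l}" and pab: "P a b \<and> (a,b) \<noteq> (r,c)"
    have ne: "\<phi> (a,b) \<noteq> (i,j)"
    proof
      assume eq: "\<phi> (a,b) = (i,j)"
      from pab have "a < r \<or> r < a \<or> b < c \<or> c < b" by auto
      then show False using E3[OF a b rc] E3[OF rc a b] eq fe by auto
    qed
    have "switch M (i,j) (fst (\<phi> (a,b))) (snd (\<phi> (a,b)))" using E2 a b pab by blast
    then have "M (fst (\<phi> (a,b))) (snd (\<phi> (a,b)))" using ne unfolding switch_def by (auto split: if_splits)
    then show "\<exists>x. inblk \<rho> \<gamma> a b x \<and> M (fst x) (snd x)" using bl a b by blast
  qed
  have Z: "\<forall>x. inblk \<rho> \<gamma> r c x \<longrightarrow> \<not> M (fst x) (snd x)"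
  proof (intro allI impI notI)
    fix x assume x: "inblk \<rho> \<gamma> r c x" and mx: "M (fst x) (snd x)"
    have "\<forall>a\<in>{1..k}. \<forall>b\<in>{1..l}. P a b \<longrightarrow> (\<exists>x. inblk \<rho> \<gamma> a b x \<and> M (fst x) (snd x))"
      using W x mx by blast
    from grid_to_emb[OF c1 c2 this] av show False unfolding avoids_def by blast
  qed
  have "inblk \<rho> \<gamma> r c (i,j)" using bl rc fe by metis
  with c1 c2 W Z show ?thesis by blast
qed

lemma lift_blk: "inblk \<rho>s \<gamma>s a b x \<Longrightarrow> \<rho> (a-1) \<le> \<rho>s (a-1) \<Longrightarrow> \<rho>s a \<le> \<rho> a
   \<Longrightarrow> \<gamma> (b-1) \<le> \<gamma>s (b-1) \<Longrightarrow> \<gamma>s b \<le> \<gamma> b \<Longrightarrow> inblk \<rho> \<gamma> a b x"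
  unfolding inblk_def by auto

lemma combine:
  assumes av: "avoids k l P m n M"
   and rr: "r1 \<le> r" "r \<le> r2" "r2 \<le> k" "1 \<le> r1" "1 \<le> c" "c \<le> l"
   and band: "\<forall>a\<in>{r1..r2}. \<forall>b\<in>{1..l}. P a b \<longrightarrow> b = c"
   and H: "\<forall>a\<in>{1..k}. \<forall>b\<in>{1..l}. P a b \<longrightarrow> (a < r1 \<longrightarrow> (if tb then b \<le> c else b = c \<or> a = r1 - 1))
             \<and> (r2 < a \<longrightarrow> (if bb then c \<le> b else b = c \<or> a = r2 + 1))"
   and S1: "cuts k m \<rho>s" and S2: "cuts l n \<gamma>s" and S3: "inblk \<rho>s \<gamma>s r c (i,j1)"
   and S4: "\<forall>a\<in>{1..k}. \<forall>b\<in>{1..l}. P a b \<and> (a,b) \<noteq> (r,c) \<longrightarrow> (\<exists>x. inblk \<rho>s \<gamma>s a b x \<and> M (fst x) (snd x))"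
   and S5: "\<forall>x. inblk \<rho>s \<gamma>s r c x \<longrightarrow> \<not> M (fst x) (snd x)"
   and T1: "cuts k m \<rho>t" and T2: "cuts l n \<gamma>t" and T3: "inblk \<rho>t \<gamma>t r c (i,j2)"
   and T4: "\<forall>a\<in>{1..k}. \<forall>b\<in>{1..l}. P a b \<and> (a,b) \<noteq> (r,c) \<longrightarrow> (\<exists>x. inblk \<rho>t \<gamma>t a b x \<and> M (fst x) (snd x))"
   and T5: "\<forall>x. inblk \<rho>t \<gamma>t r c x \<longrightarrow> \<not> M (fst x) (snd x)"
   and g: "j1 < g" "g < j2" "M i g"
  shows False
proof -
  have gs: "\<gamma>s c < g"
  proof (rule ccontr)
    assume "\<not> \<gamma>s c < g"
    then have "inblk \<rho>s \<gamma>s r c (i,g)" using S3 g unfolding inblk_def by auto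
    with S5 g show False by auto
  qed
  have gt: "g \<le> \<gamma>t (c-1)"
  proof (rule ccontr)
    assume "\<not> g \<le> \<gamma>t (c-1)"
    then have "inblk \<rho>t \<gamma>t r c (i,g)" using T3 g unfolding inblk_def by auto
    with T5 g show False by auto
  qed
  have iS: "\<rho>s (r-1) < i" "i \<le> \<rho>s r" "\<gamma>s (c-1) < j1" "j1 \<le> \<gamma>s c" using S3 unfolding inblk_def by auto
  have iT: "\<rho>t (r-1) < i" "i \<le> \<rho>t r" "\<gamma>t (c-1) < j2" "j2 \<le> \<gamma>t c" using T3 unfolding inblk_def by auto
  have stS: "\<And>a. 1 \<le> a \<Longrightarrow> a \<le> k \<Longrightarrow> \<rho>s (a-1) < \<rho>s a" using cuts_step[OF S1] by blast
  have stT: "\<And>a. 1 \<le> a \<Longrightarrow> a \<le> k \<Longrightarrow> \<rho>t (a-1) < \<rho>t a" using cuts_step[OF T1] by blast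
  have cstS: "\<And>b. 1 \<le> b \<Longrightarrow> b \<le> l \<Longrightarrow> \<gamma>s (b-1) < \<gamma>s b" using cuts_step[OF S2] by blast
  have cstT: "\<And>b. 1 \<le> b \<Longrightarrow> b \<le> l \<Longrightarrow> \<gamma>t (b-1) < \<gamma>t b" using cuts_step[OF T2] by blast
  define \<rho> where "\<rho> a = (if a < r1 - 1 then (if tb then \<rho>s a else min (\<rho>s a) (\<rho>t a))
      else if a < r then max (\<rho>s a) (\<rho>t a) else if a \<le> r2 then min (\<rho>s a) (\<rho>t a)
      else if bb then \<rho>t a else max (\<rho>s a) (\<rho>t a))" for a
  define \<gamma> where "\<gamma> b = (if b < c then \<gamma>s b else \<gamma>t b)" for b
  have cc: "cuts l n \<gamma>"
    unfolding cuts_def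
  proof (intro conjI ballI)
    fix b assume b: "b \<in> {1..l}"
    show "\<gamma> (b-1) < \<gamma> b"
    proof (cases "b < c")
      case True then show ?thesis using cstS[of b] b unfolding \<gamma>_def by auto
    next
      case False
      show ?thesis
      proof (cases "b = c")
        case True then show ?thesis using iS iT g rr unfolding \<gamma>_def by auto
      next
        case False
        with \<open>\<not> b < c\<close> show ?thesis using cstT[of b] b unfolding \<gamma>_def by auto
      qed
    qed
  next
    show "\<gamma> l \<le> n" using T2 rr unfolding cuts_def \<gamma>_def by auto
  qed
  have colS: "\<gamma> (b-1) \<le> \<gamma>s (b-1) \<and> \<gamma>s b \<le> \<gamma> b" if "b \<le> c" "1 \<le> b" for b
  proof (cases "b = c")
    case True
    have "\<gamma>t (c-1) < \<gamma>t c" using cstT[of c] rr by auto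
    then show ?thesis using True gs gt rr unfolding \<gamma>_def by auto
  next
    case False then show ?thesis using that unfolding \<gamma>_def by auto
  qed
  have colT: "\<gamma> (b-1) \<le> \<gamma>t (b-1) \<and> \<gamma>t b \<le> \<gamma> b" if "c \<le> b" for b
  proof (cases "b = c")
    case True
    then show ?thesis using gs gt iS g rr unfolding \<gamma>_def by auto
  next
    case False then show ?thesis using that unfolding \<gamma>_def by auto
  qed
  have gC: "\<gamma> (c-1) < g" "g \<le> \<gamma> c"
  proof -
    have "\<gamma>t (c-1) < \<gamma>t c" using cstT[of c] rr by auto
    then show "\<gamma> (c-1) < g" "g \<le> \<gamma> c" using gs gt iS g rr unfolding \<gamma>_def by auto
  qed
  have q1: "\<rho> a = (if tb then \<rho>s a else min (\<rho>s a) (\<rho>t a))" if "a < r1 - 1" for a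
    using that unfolding \<rho>_def by simp
  have q2: "\<rho> a = max (\<rho>s a) (\<rho>t a)" if "r1 - 1 \<le> a" "a < r" for a
    using that unfolding \<rho>_def by simp
  have q3: "\<rho> a = min (\<rho>s a) (\<rho>t a)" if "r \<le> a" "a \<le> r2" for a
    using that rr unfolding \<rho>_def by simp
  have q4: "\<rho> a = (if bb then \<rho>t a else max (\<rho>s a) (\<rho>t a))" if "r2 < a" for a
    using that rr unfolding \<rho>_def by simp
  let ?rS = "\<lambda>a. \<rho> (a-1) \<le> \<rho>s (a-1) \<and> \<rho>s a \<le> \<rho> a"
  let ?rT = "\<lambda>a. \<rho> (a-1) \<le> \<rho>t (a-1) \<and> \<rho>t a \<le> \<rho> a"
  have rowAll: "\<rho> (a-1) < \<rho> a \<and> (a \<noteq> r \<longrightarrow> ?rS a \<or> ?rT a)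
     \<and> (a < r1 \<longrightarrow> (if tb then ?rS a else (a = r1 - 1 \<longrightarrow> ?rS a \<and> ?rT a)))
     \<and> (r2 < a \<longrightarrow> (if bb then ?rT a else (a = r2 + 1 \<longrightarrow> ?rS a \<and> ?rT a)))"
    if a: "a \<in> {1..k}" for a
  proof -
    have s1: "\<rho>s (a-1) < \<rho>s a" "\<rho>t (a-1) < \<rho>t a" using stS stT a by auto
    consider (R1) "a < r1 - 1" | (R2) "a = r1 - 1" | (R3) "r1 - 1 < a" "a < r" | (R4) "a = r"
      | (R5) "r < a" "a \<le> r2" | (R6) "a = r2 + 1" | (R7) "r2 + 1 < a" by linarith
    then show ?thesis
    proof cases
      case R1
      have e: "\<rho> (a-1) = (if tb then \<rho>s (a-1) else min (\<rho>s (a-1)) (\<rho>t (a-1)))"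
              "\<rho> a = (if tb then \<rho>s a else min (\<rho>s a) (\<rho>t a))"
        using q1 R1 by auto
      have "\<not> r2 < a" "a < r1" "a \<noteq> r" "a \<noteq> r1 - 1" using R1 rr by auto
      then show ?thesis using s1 unfolding e by (cases tb) (auto simp: min_def max_def)
    next
      case R2
      have e: "\<rho> (a-1) = (if tb then \<rho>s (a-1) else min (\<rho>s (a-1)) (\<rho>t (a-1)))"
              "\<rho> a = max (\<rho>s a) (\<rho>t a)"
        using q1 q2 R2 a rr by auto
      have "\<not> r2 < a" "a < r1" "a \<noteq> r" using R2 a rr by auto
      then show ?thesis using s1 unfolding e by (cases tb) (auto simp: min_def max_def)
    next
      case R3
      have e: "\<rho> (a-1) = max (\<rho>s (a-1)) (\<rho>t (a-1))" "\<rho> a = max (\<rho>s a) (\<rho>t a)"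
        using q2 R3 by auto
      have "\<not> r2 < a" "\<not> a < r1" "a \<noteq> r" using R3 rr by auto
      then show ?thesis using s1 unfolding e by (auto simp: min_def max_def)
    next
      case R4
      have e: "\<rho> (a-1) = max (\<rho>s (a-1)) (\<rho>t (a-1))" "\<rho> a = min (\<rho>s a) (\<rho>t a)"
        using q2 q3 R4 rr a by auto
      have "\<not> r2 < a" "\<not> a < r1" using R4 rr by auto
      then show ?thesis using iS iT R4 unfolding e by auto
    next
      case R5
      have e: "\<rho> (a-1) = min (\<rho>s (a-1)) (\<rho>t (a-1))" "\<rho> a = min (\<rho>s a) (\<rho>t a)"
        using q3 R5 by auto
      have "\<not> r2 < a" "\<not> a < r1" "a \<noteq> r" using R5 rr by auto
      then show ?thesis using s1 unfolding e by (auto simp: min_def max_def)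
    next
      case R6
      have e: "\<rho> (a-1) = min (\<rho>s (a-1)) (\<rho>t (a-1))" "\<rho> a = (if bb then \<rho>t a else max (\<rho>s a) (\<rho>t a))"
        using q3 q4 R6 rr by auto
      have "r2 < a" "\<not> a < r1" "a \<noteq> r" using R6 rr by auto
      then show ?thesis using s1 R6 unfolding e by (cases bb) (auto simp: min_def max_def)
    next
      case R7
      have e: "\<rho> (a-1) = (if bb then \<rho>t (a-1) else max (\<rho>s (a-1)) (\<rho>t (a-1)))"
              "\<rho> a = (if bb then \<rho>t a else max (\<rho>s a) (\<rho>t a))"
        using q4 R7 by auto
      have "r2 < a" "\<not> a < r1" "a \<noteq> r" "a \<noteq> r2 + 1" using R7 rr by auto
      then show ?thesis using s1 unfolding e by (cases bb) (auto simp: min_def max_def)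
    qed
  qed
  have cr: "cuts k m \<rho>"
    unfolding cuts_def
  proof (intro conjI ballI)
    fix a assume a: "a \<in> {1..k}"
    show "\<rho> (a-1) < \<rho> a" using rowAll[OF a] by blast
  next
    show "\<rho> k \<le> m" using S1 T1 unfolding cuts_def \<rho>_def by auto
  qed
  have rowSome: "?rS a \<or> ?rT a" if a: "a \<in> {1..k}" "a \<noteq> r" for a
    using rowAll[OF a(1)] a(2) by blast
  have rowTop: "if tb then ?rS a else (a = r1 - 1 \<longrightarrow> ?rS a \<and> ?rT a)" if a: "a \<in> {1..k}" "a < r1" for a
    using rowAll[OF a(1)] a(2) by blast
  have rowBot: "if bb then ?rT a else (a = r2 + 1 \<longrightarrow> ?rS a \<and> ?rT a)" if a: "a \<in> {1..k}" "r2 < a" for a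
    using rowAll[OF a(1)] a(2) by blast
  have W: "\<forall>a\<in>{1..k}. \<forall>b\<in>{1..l}. P a b \<longrightarrow> (\<exists>x. inblk \<rho> \<gamma> a b x \<and> M (fst x) (snd x))"
  proof (intro ballI impI)
    fix a b assume a: "a \<in> {1..k}" and b: "b \<in> {1..l}" and p: "P a b"
    show "\<exists>x. inblk \<rho> \<gamma> a b x \<and> M (fst x) (snd x)"
    proof (cases "(a,b) = (r,c)")
      case True
      have "\<rho> (r-1) < i" "i \<le> \<rho> r" using iS iT rr unfolding \<rho>_def by auto
      then have "inblk \<rho> \<gamma> a b (i,g)" using True gC unfolding inblk_def by auto
      then show ?thesis using g by auto
    next
      case False
      have ar: "a \<noteq> r" using False band p rr b by auto
      have "(?rS a \<and> b \<le> c) \<or> (?rT a \<and> c \<le> b)"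
      proof (cases "b = c")
        case True then show ?thesis using rowSome[OF a ar] by auto
      next
        case bc: False
        then have out: "a < r1 \<or> r2 < a" using band p a b by force
        have Ha: "(a < r1 \<longrightarrow> (if tb then b \<le> c else b = c \<or> a = r1 - 1))
             \<and> (r2 < a \<longrightarrow> (if bb then c \<le> b else b = c \<or> a = r2 + 1))" using H a b p by blast
        show ?thesis
        proof (cases "a < r1")
          case True
          then have "\<not> r2 < a" using rr by auto
          show ?thesis using rowTop[OF a True] Ha True bc by (cases tb) auto
        next
          case False
          then have "r2 < a" using out by auto
          show ?thesis using rowBot[OF a \<open>r2 < a\<close>] Ha \<open>r2 < a\<close> bc by (cases bb) auto
        qed
      qed
      then show ?thesis
      proof
        assume h: "?rS a \<and> b \<le> c"
        obtain x where x: "inblk \<rho>s \<gamma>s a b x" "M (fst x) (snd x)" using S4 a b p False by blast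
        have "inblk \<rho> \<gamma> a b x" using lift_blk[OF x(1)] h colS[of b] b by auto
        then show ?thesis using x by blast
      next
        assume h: "?rT a \<and> c \<le> b"
        obtain x where x: "inblk \<rho>t \<gamma>t a b x" "M (fst x) (snd x)" using T4 a b p False by blast
        have "inblk \<rho> \<gamma> a b x" using lift_blk[OF x(1)] h colT[of b] b by auto
        then show ?thesis using x by blast
      qed
    qed
  qed
  from grid_to_emb[OF cr cc W] av show False unfolding avoids_def by blast
qed

lemma run_between:
  assumes h1: "hzero_run m n M i a b" and h2: "hzero_run m n M i a' b'" and ne: "(a,b) \<noteq> (a',b')"
    and le: "a \<le> a'"
  shows "\<exists>g. b < g \<and> g < a' \<and> M i g"
proof (cases "a = a'")
  case True
  then have bb: "b \<noteq> b'" using ne by auto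
  show ?thesis
  proof (cases "b < b'")
    case True
    then have "b \<noteq> n" using h2 unfolding hzero_run_def by auto
    then have "M i (b+1)" using h1 unfolding hzero_run_def by auto
    moreover have "b + 1 \<in> {a'..b'}" using True h1 \<open>a = a'\<close> unfolding hzero_run_def by auto
    ultimately show ?thesis using h2 unfolding hzero_run_def by auto
  next
    case False
    then have lt: "b' < b" using bb by auto
    then have "b' \<noteq> n" using h1 unfolding hzero_run_def by auto
    then have "M i (b'+1)" using h2 unfolding hzero_run_def by auto
    moreover have "b' + 1 \<in> {a..b}" using lt h2 \<open>a = a'\<close> unfolding hzero_run_def by auto
    ultimately show ?thesis using h1 unfolding hzero_run_def by auto
  qed
next
  case False
  then have lt: "a < a'" using le by auto
  then have "a' \<noteq> 1" using h1 unfolding hzero_run_def by auto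
  then have m1: "M i (a' - 1)" using h2 unfolding hzero_run_def by auto
  have "\<not> (a' - 1 \<le> b)"
  proof
    assume "a' - 1 \<le> b"
    then have "a' - 1 \<in> {a..b}" using lt by auto
    then show False using h1 m1 unfolding hzero_run_def by auto
  qed
  then have blt: "b + 1 < a'" by auto
  then have "b \<noteq> n" using h2 unfolding hzero_run_def by auto
  then have "M i (b+1)" using h1 unfolding hzero_run_def by auto
  then show ?thesis using blt by auto
qed

theorem lemma3p11:
  fixes k l r1 r2 c :: nat and P :: "nat \<Rightarrow> nat \<Rightarrow> bool"
  assumes rows: "1 \<le> r1" "r1 \<le> r2" "r2 \<le> k"
    and col: "1 \<le> c" "c \<le> l"
    and empty_band: "\<forall>r\<in>{r1..r2}. \<forall>j\<in>{1..l}. P r j \<longrightarrow> j = c"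
    and types:
      "(\<forall>i\<in>{1..k}. \<forall>j\<in>{1..l}. P i j \<longrightarrow>
           (i < r1 \<longrightarrow> j = c \<or> i = r1 - 1) \<and> (r2 < i \<longrightarrow> j = c \<or> i = r2 + 1))
     \<or> (\<forall>i\<in>{1..k}. \<forall>j\<in>{1..l}. P i j \<longrightarrow>
           (i < r1 \<longrightarrow> j = c \<or> i = r1 - 1) \<and> (r2 < i \<longrightarrow> c \<le> j))
     \<or> (\<forall>i\<in>{1..k}. \<forall>j\<in>{1..l}. P i j \<longrightarrow>
           (i < r1 \<longrightarrow> j \<le> c) \<and> (r2 < i \<longrightarrow> c \<le> j))"
  shows "\<forall>r\<in>{r1..r2}. P r c \<longrightarrow> row_bounding k l P (r, c)"
proof (intro ballI impI)
  fix r assume r: "r \<in> {r1..r2}" and prc: "P r c"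
  obtain tb bb where H: "\<forall>a\<in>{1..k}. \<forall>b\<in>{1..l}. P a b \<longrightarrow> (a < r1 \<longrightarrow> (if tb then b \<le> c else b = c \<or> a = r1 - 1))
             \<and> (r2 < a \<longrightarrow> (if bb then c \<le> b else b = c \<or> a = r2 + 1))"
  proof -
    from types consider
      (A) "\<forall>i\<in>{1..k}. \<forall>j\<in>{1..l}. P i j \<longrightarrow>
           (i < r1 \<longrightarrow> j = c \<or> i = r1 - 1) \<and> (r2 < i \<longrightarrow> j = c \<or> i = r2 + 1)"
    | (B) "\<forall>i\<in>{1..k}. \<forall>j\<in>{1..l}. P i j \<longrightarrow>
           (i < r1 \<longrightarrow> j = c \<or> i = r1 - 1) \<and> (r2 < i \<longrightarrow> c \<le> j)"
    | (C) "\<forall>i\<in>{1..k}. \<forall>j\<in>{1..l}. P i j \<longrightarrow>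
           (i < r1 \<longrightarrow> j \<le> c) \<and> (r2 < i \<longrightarrow> c \<le> j)" by blast
    then show ?thesis
    proof cases
      case A then show ?thesis using that[of False False] by simp
    next
      case B then show ?thesis using that[of False True] by simp
    next
      case C then show ?thesis using that[of True True] by simp
    qed
  qed
  have rr: "r1 \<le> r" "r \<le> r2" using r by auto
  have rk: "r \<in> {1..k}" "c \<in> {1..l}" using r rows col by auto
  show "row_bounding k l P (r, c)"
    unfolding row_bounding_def
  proof (rule exI[of _ 1], intro allI impI ballI)
    fix m n M i assume av: "avoids k l P m n M" and i: "i \<in> {1..m}"
    let ?CR = "critical_runs k l P (r,c) m n M i"
    have key: False if x: "(a,b) \<in> ?CR" and y: "(a',b') \<in> ?CR" and ne: "(a,b) \<noteq> (a',b')" and le: "a \<le> a'"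
      for a b a' b'
    proof -
      obtain j where j: "j \<in> {a..b}" "critical_entry k l P (r,c) m n M (i,j)" and h1: "hzero_run m n M i a b"
        using x unfolding critical_runs_def by auto
      obtain j' where j': "j' \<in> {a'..b'}" "critical_entry k l P (r,c) m n M (i,j')" and h2: "hzero_run m n M i a' b'"
        using y unfolding critical_runs_def by auto
      obtain g where g: "b < g" "g < a'" "M i g" using run_between[OF h1 h2 ne le] by blast
      obtain \<rho>s \<gamma>s where S: "cuts k m \<rho>s" "cuts l n \<gamma>s" "inblk \<rho>s \<gamma>s r c (i,j)"
       "\<forall>a\<in>{1..k}. \<forall>b\<in>{1..l}. P a b \<and> (a,b) \<noteq> (r,c) \<longrightarrow> (\<exists>x. inblk \<rho>s \<gamma>s a b x \<and> M (fst x) (snd x))"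
       "\<forall>x. inblk \<rho>s \<gamma>s r c x \<longrightarrow> \<not> M (fst x) (snd x)"
        using crit_grid[OF av j(2) rk] by blast
      obtain \<rho>t \<gamma>t where T: "cuts k m \<rho>t" "cuts l n \<gamma>t" "inblk \<rho>t \<gamma>t r c (i,j')"
       "\<forall>a\<in>{1..k}. \<forall>b\<in>{1..l}. P a b \<and> (a,b) \<noteq> (r,c) \<longrightarrow> (\<exists>x. inblk \<rho>t \<gamma>t a b x \<and> M (fst x) (snd x))"
       "\<forall>x. inblk \<rho>t \<gamma>t r c x \<longrightarrow> \<not> M (fst x) (snd x)"
        using crit_grid[OF av j'(2) rk] by blast
      have gg: "j < g" "g < j'" using j j' g by auto
      show False
        using combine[OF av rr rows(3) rows(1) col empty_band H S T gg g(3)] .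
    qed
    have uniq: "\<forall>x\<in>?CR. \<forall>y\<in>?CR. x = y"
    proof (intro ballI)
      fix x y assume x: "x \<in> ?CR" and y: "y \<in> ?CR"
      obtain a b a' b' where xy: "x = (a,b)" "y = (a',b')" by (cases x, cases y) auto
      show "x = y"
      proof (rule ccontr)
        assume ne: "x \<noteq> y"
        show False
        proof (cases "a \<le> a'")
          case True then show False using key[of a b a' b'] x y ne xy by auto
        next
          case False then show False using key[of a' b' a b] x y ne xy by auto
        qed
      qed
    qed
    show "card ?CR \<le> 1"
    proof (cases "finite ?CR")
      case True then show ?thesis using uniq card_le_Suc0_iff_eq[of ?CR] by simp
    next
      case False then show ?thesis by simp
    qed
  qed
qed

end
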